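(* Let $(\pi_\rho,V_\rho)$ be an irreducible unitary representation of $Spin(n)$ and $V_\rho\otimes\mathbf{R}^n=\bigoplus_{k=0}^N V_{\lambda_k}$ its orthogonal decomposition into irreducible submodules. Then for every $k$, every $u\in\mathbf{R}^n$ and every orthonormal basis $\{e_i\}_{i=1}^n$ of $\mathbf{R}^n$, $$-\frac14\sum_{i=1}^n p^\rho_{\lambda_k}(e_i)\,\pi_\rho([e_i,u])=m(\lambda_k)\,p^\rho_{\lambda_k}(u),$$ where $[e_i,u]=e_iu-ue_i\in\mathfrak{spin}(n)$ is computed in $Cl_n$.
   Context: $Cl_n$ is the real Clifford algebra of $\mathbf{R}^n$ with $xy+yx=-2\langle x,y\rangle$; $\mathfrak{spin}(n)=\mathrm{span}\{[e_k,e_l]\}\subset Cl_n$, $Spin(n)=\exp\mathfrak{spin}(n)$, $\pi_{\mathrm{Ad}}(g)x=gxg^{-1}$ on $\mathbf{R}^n$, infinitesimally $\pi_{\mathrm{Ad}}(a)x=[a,x]$. $\pi_\rho$ also denotes the infinitesimal representation. $V_\rho\otimes\mathbf{R}^n$ carries $\pi_\rho\otimes\pi_{\mathrm{Ad}}$ and the tensor inner product; its irreducible constituents have multiplicity one and are mutually orthogonal; $\Pi^\rho_{\lambda_k}$ is the orthogonal projection onto $V_{\lambda_k}$, and the Clifford homomorphism is $p^\rho_{\lambda_k}(u)\phi:=\Pi^\rho_{\lambda_k}(\phi\otimes u)$. The conformal weight $m(\lambda_k)$ is the scalar by which the operator $\widehat C=\frac1{32}\sum_{i,j}\pi_\rho([e_i,e_j])\otimes\pi_{\mathrm{Ad}}([e_i,e_j])$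 acts on $V_{\lambda_k}$; explicitly $m(\lambda_k)=\frac12\big(n-\|\delta+\lambda_k\|^2+\|\delta+\rho\|^2-1\big)$, where $\delta$ is half the sum of positive roots and the norm is the standard Euclidean one on weights. *)

theory Defs
  imports "HOL-Analysis.Analysis"
begin

text \<open>R^n is modelled as real^'n for a finite linearly ordered index type 'n
(n = CARD('n)); the standard basis vector e_i is axis i 1.
Cl_n is modelled by coordinates with respect to the monomial basis
e_I = e_i1 ... e_ik (i1 < ... < ik), I ranging over subsets of 'n.
The product is e_I e_J = (-1)^(#{(i,j) in I x J. j < i} + #(I inter J)) e_(I symdiff J),
which encodes the relations x y + y x = -2 <x,y>.\<close>

type_synonym 'n cl = "'n set \<Rightarrow> real"

definition symdiff :: "'a set \<Rightarrow> 'a set \<Rightarrow> 'a set" where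
  "symdiff I J = (I - J) \<union> (J - I)"

definition cl_sign :: "('n::{finite,linorder}) set \<Rightarrow> ('n::{finite,linorder}) set \<Rightarrow> real" where
  "cl_sign I J = (-1) ^ (card {(i, j). i \<in> I \<and> j \<in> J \<and> j < i} + card (I \<inter> J))"

definition cl_mult :: "('n::{finite,linorder}) cl \<Rightarrow> ('n::{finite,linorder}) cl \<Rightarrow> ('n::{finite,linorder}) cl" where
  "cl_mult x y = (\<lambda>K. \<Sum>I\<in>UNIV. x I * y (symdiff I K) * cl_sign I (symdiff I K))"

definition cl_add :: "('n::{finite}) cl \<Rightarrow> ('n::{finite}) cl \<Rightarrow> ('n::{finite}) cl" where
  "cl_add x y = (\<lambda>I. x I + y I)"

definition cl_scale :: "real \<Rightarrow> ('n::{finite}) cl \<Rightarrow> ('n::{finite}) cl" where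
  "cl_scale c x = (\<lambda>I. c * x I)"

definition cl_comm :: "('n::{finite,linorder}) cl \<Rightarrow> ('n::{finite,linorder}) cl \<Rightarrow> ('n::{finite,linorder}) cl" where
  "cl_comm x y = (\<lambda>K. cl_mult x y K - cl_mult y x K)"

definition cl_vec :: "real ^ ('n::{finite,linorder}) \<Rightarrow> ('n::{finite,linorder}) cl" where
  "cl_vec u = (\<lambda>I. \<Sum>i\<in>UNIV. if I = {i} then u $ i else 0)"

definition cl_to_vec :: "('n::{finite,linorder}) cl \<Rightarrow> real ^ ('n::{finite,linorder})" where
  "cl_to_vec c = (\<chi> i. c {i})"

definition spin_alg :: "('n::{finite,linorder}) cl set" where
  "spin_alg = {(\<lambda>I. \<Sum>k\<in>UNIV. \<Sum>l\<in>UNIV.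
                   c k l * cl_comm (cl_vec (axis k 1)) (cl_vec (axis l 1)) I) | c. True}"

definition pi_Ad :: "('n::{finite,linorder}) cl \<Rightarrow> real ^ ('n::{finite,linorder}) \<Rightarrow> real ^ ('n::{finite,linorder})" where
  "pi_Ad a x = cl_to_vec (cl_comm a (cl_vec x))"

text \<open>V (x) R^n is modelled as 'v ^ 'n: the element X corresponds to
sum_j X$j (x) e_j.  With this identification the inner product of 'v ^ 'n is
exactly the tensor inner product.\<close>

definition tens :: "'v::real_vector \<Rightarrow> real ^ ('n::{finite}) \<Rightarrow> 'v ^ ('n::{finite})" where
  "tens \<phi> u = (\<chi> i. (u $ i) *\<^sub>R \<phi>)"

text \<open>A (x) B acting on V (x) R^n.\<close>
definition tensor_op :: "('v \<Rightarrow> 'v) \<Rightarrow> (real ^ ('n::{finite}) \<Rightarrow> real ^ ('n::{finite})) \<Rightarrow> 'v ^ ('n::{finite}) \<Rightarrow> ('v::real_vector) ^ ('n::{finite})" where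
  "tensor_op A B X = (\<chi> i. \<Sum>l\<in>UNIV. (B (axis l 1) $ i) *\<^sub>R A (X $ l))"

definition tens_act :: "(('n::{finite,linorder}) cl \<Rightarrow> 'v \<Rightarrow> 'v) \<Rightarrow> ('n::{finite,linorder}) cl \<Rightarrow> 'v ^ ('n::{finite,linorder}) \<Rightarrow> ('v::real_vector) ^ ('n::{finite,linorder})" where
  "tens_act \<pi> a X = tensor_op (\<pi> a) id X + tensor_op id (pi_Ad a) X"

definition C_hat :: "(('n::{finite,linorder}) cl \<Rightarrow> 'v \<Rightarrow> 'v) \<Rightarrow> 'v ^ ('n::{finite,linorder}) \<Rightarrow> ('v::real_vector) ^ ('n::{finite,linorder})" where
  "C_hat \<pi> X = (1/32) *\<^sub>R (\<Sum>i\<in>UNIV. \<Sum>j\<in>UNIV.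
      tensor_op (\<pi> (cl_comm (cl_vec (axis i 1)) (cl_vec (axis j 1))))
                (pi_Ad (cl_comm (cl_vec (axis i 1)) (cl_vec (axis j 1)))) X)"

definition orth_proj :: "'a::real_inner set \<Rightarrow> 'a \<Rightarrow> 'a" where
  "orth_proj W x = (THE y. y \<in> W \<and> (\<forall>w\<in>W. inner (x - y) w = 0))"

definition clifford_hom :: "('v::real_inner ^ ('n::{finite})) set \<Rightarrow> real ^ ('n::{finite}) \<Rightarrow> 'v \<Rightarrow> 'v ^ ('n::{finite})" where
  "clifford_hom W u \<phi> = orth_proj W (tens \<phi> u)"

text \<open>A (complex) irreducible unitary representation of spin(n), modelled on its
underlying real inner product space (real part of the Hermitian product) together
with its complex structure J, which commutes with the action and is orthogonal.\<close>
definition unitary_spin_rep :: "(('n::{finite,linorder}) cl \<Rightarrow> 'v \<Rightarrow> 'v) \<Rightarrow> ('v \<Rightarrow> 'v) \<Rightarrow> ('v::real_inner) set \<Rightarrow> bool" where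
  "unitary_spin_rep \<pi> J V \<longleftrightarrow>
     subspace V \<and> linear J \<and> (\<forall>x\<in>V. J x \<in> V) \<and> (\<forall>x. J (J x) = - x) \<and>
     (\<forall>x y. inner (J x) (J y) = inner x y) \<and>
     (\<forall>a\<in>spin_alg. linear (\<pi> a) \<and> (\<forall>x\<in>V. \<pi> a x \<in> V)) \<and>
     (\<forall>a\<in>spin_alg. \<forall>b\<in>spin_alg. \<pi> (cl_add a b) = (\<lambda>x. \<pi> a x + \<pi> b x)) \<and>
     (\<forall>a\<in>spin_alg. \<forall>c. \<pi> (cl_scale c a) = (\<lambda>x. c *\<^sub>R \<pi> a x)) \<and>
     (\<forall>a\<in>spin_alg. \<forall>b\<in>spin_alg. \<pi> (cl_comm a b) = (\<lambda>x. \<pi> a (\<pi> b x) - \<pi> b (\<pi> a x))) \<and>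
     (\<forall>a\<in>spin_alg. \<forall>x y. inner (\<pi> a x) y = - inner x (\<pi> a y)) \<and>
     (\<forall>a\<in>spin_alg. \<forall>x. \<pi> a (J x) = J (\<pi> a x))"

definition irreducible_rep :: "(('n::{finite,linorder}) cl \<Rightarrow> 'v \<Rightarrow> 'v) \<Rightarrow> ('v \<Rightarrow> 'v) \<Rightarrow> ('v::real_inner) set \<Rightarrow> bool" where
  "irreducible_rep \<pi> J V \<longleftrightarrow> V \<noteq> {0} \<and>
     (\<forall>U. subspace U \<and> U \<subseteq> V \<and> (\<forall>x\<in>U. J x \<in> U) \<and>
          (\<forall>a\<in>spin_alg. \<forall>x\<in>U. \<pi> a x \<in> U) \<longrightarrow> U = {0} \<or> U = V)"

definition tens_J :: "('v \<Rightarrow> 'v) \<Rightarrow> 'v ^ ('n::{finite}) \<Rightarrow> ('v::real_vector) ^ ('n::{finite})" where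
  "tens_J J X = (\<chi> i. J (X $ i))"

end

theory Submission
  imports Defs
begin


lemma symdiff_sym: "symdiff I J = symdiff J I" unfolding symdiff_def by blast
lemma symdiff_inv: "symdiff I (symdiff I K) = K" unfolding symdiff_def by blast

lemma sum_if_eq: "(\<Sum>x\<in>UNIV. (if x = c then a else 0) * h x) = (a::real) * h (c::'a::finite)"
proof -
  have *: "(\<lambda>x. (if x = c then a else 0) * h x) = (\<lambda>x. if x = c then a * h c else 0)" by auto
  show ?thesis by (subst *) simp
qed

lemma cl_mult_mono:
  fixes I J :: "('n::{finite,linorder}) set"
  shows "cl_mult (\<lambda>K. if K = I then a else 0) (\<lambda>K. if K = J then b else 0)
       = (\<lambda>K. if K = symdiff I J then a * b * cl_sign I J else 0)"
proof
  fix K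
  have "cl_mult (\<lambda>K. if K = I then a else 0) (\<lambda>K. if K = J then b else 0) K
     = a * ((if symdiff I K = J then b else 0) * cl_sign I (symdiff I K))"
    unfolding cl_mult_def mult.assoc by (rule sum_if_eq)
  also have "\<dots> = (if K = symdiff I J then a * b * cl_sign I J else 0)"
    by (auto simp: symdiff_inv)
  finally show "cl_mult (\<lambda>K. if K = I then a else 0) (\<lambda>K. if K = J then b else 0) K
       = (if K = symdiff I J then a * b * cl_sign I J else 0)" .
qed

lemma cl_vec_axis:
  shows "cl_vec (axis k 1 :: real^('n::{finite,linorder})) = (\<lambda>I. if I = {k} then 1 else 0)"
proof
  fix I
  have "(\<Sum>i\<in>UNIV. if I = {i} then (axis k 1 :: real^('n::{finite,linorder})) $ i else 0) = (\<Sum>i\<in>UNIV. if i = k then (if I = {k} then 1 else 0) else 0)"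
    by (rule sum.cong) (auto simp: axis_def)
  then show "cl_vec (axis k 1 :: real^('n::{finite,linorder})) I = (if I = {k} then 1 else 0)"
    unfolding cl_vec_def by simp
qed

lemma cl_comm_mono:
  fixes I J :: "('n::{finite,linorder}) set"
  shows "cl_comm (\<lambda>K. if K = I then a else 0) (\<lambda>K. if K = J then b else 0)
       = (\<lambda>K. if K = symdiff I J then a * b * (cl_sign I J - cl_sign J I) else 0)"
  unfolding cl_comm_def cl_mult_mono by (auto simp: symdiff_sym algebra_simps)

lemma sign11: "cl_sign {i} {j::'n::{finite,linorder}} = (if j < i then -1 else 1) * (if i = j then -1 else 1)"
proof -
  have "{(a, b). a \<in> {i} \<and> b \<in> {j} \<and> b < a} = (if j < i then {(i,j)} else {})" by auto
  then show ?thesis unfolding cl_sign_def by (auto simp: power_add)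
qed

lemma sign_pair_l:
  fixes i j :: "'n::{finite,linorder}"
  assumes "i \<noteq> j"
  shows "cl_sign {i,j} {i} = - (if i < j then -1 else 1)"
proof -
  have "{(a, b). a \<in> {i,j} \<and> b \<in> {i} \<and> b < a} = (if i < j then {(j,i)} else {})" using assms by auto
  moreover have "{i,j} \<inter> {i} = {i}" by auto
  ultimately show ?thesis unfolding cl_sign_def by (auto simp: power_add)
qed

lemma sign_pair_r:
  fixes i j :: "'n::{finite,linorder}"
  assumes "i \<noteq> j"
  shows "cl_sign {i} {i,j} = - (if j < i then -1 else 1)"
proof -
  have "{(a, b). a \<in> {i} \<and> b \<in> {i,j} \<and> b < a} = (if j < i then {(i,j)} else {})" using assms by auto
  moreover have "{i} \<inter> {i,j} = {i}" by auto
  ultimately show ?thesis unfolding cl_sign_def by (auto simp: power_add)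
qed

definition EE :: "'n \<Rightarrow> 'n \<Rightarrow> ('n::{finite,linorder}) cl" where
  "EE k l = cl_comm (cl_vec (axis k 1)) (cl_vec (axis l 1))"

lemma EE_eq: "EE i j = (\<lambda>K. if K = symdiff {i} {j} then (cl_sign {i} {j} - cl_sign {j} {i}) else 0)"
  unfolding EE_def cl_vec_axis cl_comm_mono by (simp add: fun_eq_iff)

lemma piAd_EE:
  fixes i j l p :: "'n::{finite,linorder}"
  shows "pi_Ad (EE i j) (axis l 1) $ p = 4 * ((if i = l \<and> j = p then 1 else 0) - (if j = l \<and> i = p then 1 else 0))"
proof (cases "i = j")
  case True
  then have "EE i j = (\<lambda>K. 0)" unfolding EE_eq by (simp add: fun_eq_iff)
  then show ?thesis unfolding pi_Ad_def cl_to_vec_def using True by (simp add: cl_comm_def cl_mult_def)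
next
  case False
  have sd: "symdiff {i} {j} = {i,j}" using False unfolding symdiff_def by auto
  have "pi_Ad (EE i j) (axis l 1) $ p = (if {p} = symdiff {i,j} {l} then (cl_sign {i} {j} - cl_sign {j} {i}) * (cl_sign {i,j} {l} - cl_sign {l} {i,j}) else 0)"
    unfolding pi_Ad_def EE_eq cl_to_vec_def cl_vec_axis sd cl_comm_mono by simp
  also have "\<dots> = 4 * ((if i = l \<and> j = p then 1 else 0) - (if j = l \<and> i = p then 1 else 0))"
  proof (cases "{p} = symdiff {i,j} {l}")
    case True
    then have "(l = i \<and> p = j) \<or> (l = j \<and> p = i)" using False unfolding symdiff_def
      by (smt (verit) Diff_iff Un_iff insert_iff singleton_iff)
    then show ?thesis
    proof
      assume h: "l = i \<and> p = j"
      have "(cl_sign {i} {j} - cl_sign {j} {i}) * (cl_sign {i,j} {l} - cl_sign {l} {i,j}) = 4"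
        using h False sign11[of i j] sign11[of j i] sign_pair_l[of i j] sign_pair_r[of i j]
        by (cases "i < j") auto
      then show ?thesis using True h False by simp
    next
      assume h: "l = j \<and> p = i"
      have "{i,j} = {j,i}" by auto
      then have "(cl_sign {i} {j} - cl_sign {j} {i}) * (cl_sign {i,j} {l} - cl_sign {l} {i,j}) = -4"
        using h False sign11[of i j] sign11[of j i] sign_pair_l[of j i] sign_pair_r[of j i]
        by (cases "i < j") auto
      then show ?thesis using True h False by simp
    qed
  next
    case F: False
    then have "\<not> (l = i \<and> p = j) \<and> \<not> (l = j \<and> p = i)" using False unfolding symdiff_def by auto
    then have "(if i = l \<and> j = p then 1 else 0) = (0::real)" "(if j = l \<and> i = p then 1 else 0) = (0::real)"
      by auto
    then show ?thesis using F by (simp only: if_False) simp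
  qed
  finally show ?thesis .
qed



lemma spin_alg_EE: "spin_alg = {(\<lambda>I. \<Sum>k\<in>UNIV. \<Sum>l\<in>UNIV. c k l * EE k l I) | c. True}"
  unfolding spin_alg_def EE_def by simp

lemma spin_add: assumes "a \<in> spin_alg" "b \<in> spin_alg" shows "cl_add a b \<in> spin_alg"
proof -
  obtain c where c: "a = (\<lambda>I. \<Sum>k\<in>UNIV. \<Sum>l\<in>UNIV. c k l * EE k l I)" using assms(1) unfolding spin_alg_EE by blast
  obtain d where d: "b = (\<lambda>I. \<Sum>k\<in>UNIV. \<Sum>l\<in>UNIV. d k l * EE k l I)" using assms(2) unfolding spin_alg_EE by blast
  have "cl_add a b = (\<lambda>I. \<Sum>k\<in>UNIV. \<Sum>l\<in>UNIV. (c k l + d k l) * EE k l I)"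
    unfolding c d by (simp add: cl_add_def fun_eq_iff sum.distrib[symmetric] ring_distribs)
  then show ?thesis unfolding spin_alg_EE mem_Collect_eq by (intro exI[of _ "\<lambda>k l. c k l + d k l"]) simp
qed

lemma spin_scale: assumes "a \<in> spin_alg" shows "cl_scale r a \<in> spin_alg"
proof -
  obtain c where c: "a = (\<lambda>I. \<Sum>k\<in>UNIV. \<Sum>l\<in>UNIV. c k l * EE k l I)" using assms(1) unfolding spin_alg_EE by blast
  have "cl_scale r a = (\<lambda>I. \<Sum>k\<in>UNIV. \<Sum>l\<in>UNIV. (r * c k l) * EE k l I)"
    unfolding c by (simp add: cl_scale_def fun_eq_iff sum_distrib_left mult.assoc)
  then show ?thesis unfolding spin_alg_EE mem_Collect_eq by (intro exI[of _ "\<lambda>k l. r * c k l"]) simp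
qed

lemma spin_zero: "(\<lambda>I. 0) \<in> spin_alg"
  unfolding spin_alg_EE by (rule CollectI, rule exI[of _ "\<lambda>k l. 0"]) simp

lemma sum_if_eq2:
  fixes a :: "'a::finite" and b :: "'b::finite"
  shows "(\<Sum>k\<in>UNIV. \<Sum>l\<in>UNIV. (if k = a then if l = b then 1 else 0 else 0) * F k l) = (F a b :: real)"
proof -
  have "\<And>k. (\<Sum>l\<in>UNIV. (if k = a then if l = b then 1 else 0 else 0) * F k l) = (if k = a then F k b else 0)"
    using sum_if_eq[of b 1 "F a"] by auto
  then show ?thesis by simp
qed

lemma spin_EE: "EE a b \<in> spin_alg"
proof -
  have "EE a b = (\<lambda>I. \<Sum>k\<in>UNIV. \<Sum>l\<in>UNIV. (if k = a then if l = b then 1 else 0 else 0) * EE k l I)"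
  proof
    fix x show "EE a b x = (\<Sum>k\<in>UNIV. \<Sum>l\<in>UNIV. (if k = a then if l = b then 1 else 0 else 0) * EE k l x)"
      using sum_if_eq2[of a b "\<lambda>k l. EE k l x"] by simp
  qed
  then show ?thesis unfolding spin_alg_EE mem_Collect_eq by (intro exI[of _ "\<lambda>k l. if k = a then if l = b then 1 else 0 else 0"]) simp
qed

context
  fixes \<pi> :: "('n::{finite,linorder}) cl \<Rightarrow> 'v \<Rightarrow> ('v::real_inner)" and J V
  assumes rep: "unitary_spin_rep \<pi> J V"
begin

lemma rep_lin: "a \<in> spin_alg \<Longrightarrow> linear (\<pi> a)"
  using rep unfolding unitary_spin_rep_def by blast
lemma rep_add: "a \<in> spin_alg \<Longrightarrow> b \<in> spin_alg \<Longrightarrow> \<pi> (cl_add a b) = (\<lambda>x. \<pi> a x + \<pi> b x)"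
  using rep unfolding unitary_spin_rep_def by blast
lemma rep_scale: "a \<in> spin_alg \<Longrightarrow> \<pi> (cl_scale c a) = (\<lambda>x. c *\<^sub>R \<pi> a x)"
  using rep unfolding unitary_spin_rep_def by blast

lemma pi_sum:
  assumes "finite S" "\<And>p. p \<in> S \<Longrightarrow> f p \<in> spin_alg"
  shows "(\<lambda>I. \<Sum>p\<in>S. c p * f p I) \<in> spin_alg \<and> \<pi> (\<lambda>I. \<Sum>p\<in>S. c p * f p I) = (\<lambda>v. \<Sum>p\<in>S. c p *\<^sub>R \<pi> (f p) v)"
  using assms
proof (induction S rule: finite_induct)
  case empty
  have h: "cl_scale 0 (\<lambda>I. 0) = (\<lambda>I. 0::real)" by (simp add: cl_scale_def)
  have "\<pi> (\<lambda>I. 0) = (\<lambda>v. 0)" using rep_scale[OF spin_zero, of 0] unfolding h by simp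
  then show ?case using spin_zero by simp
next
  case (insert x F)
  have fx: "f x \<in> spin_alg" using insert by simp
  have IH: "(\<lambda>I. \<Sum>p\<in>F. c p * f p I) \<in> spin_alg" "\<pi> (\<lambda>I. \<Sum>p\<in>F. c p * f p I) = (\<lambda>v. \<Sum>p\<in>F. c p *\<^sub>R \<pi> (f p) v)"
    using insert by auto
  have eq: "(\<lambda>I. \<Sum>p\<in>insert x F. c p * f p I) = cl_add (cl_scale (c x) (f x)) (\<lambda>I. \<Sum>p\<in>F. c p * f p I)"
    using insert(1,2) by (simp add: cl_add_def cl_scale_def)
  show ?case unfolding eq
    using spin_add[OF spin_scale[OF fx] IH(1)] rep_add[OF spin_scale[OF fx] IH(1)] rep_scale[OF fx] IH(2) insert(1,2)
    by simp
qed

end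

lemma mult_bilin:
  "cl_mult (\<lambda>I. \<Sum>k\<in>UNIV. a k * f k I) (\<lambda>J. \<Sum>l\<in>UNIV. b l * g l J) K
   = (\<Sum>k\<in>UNIV. \<Sum>l\<in>UNIV. a k * b l * cl_mult (f k) (g l) K)"
proof -
  let ?T = "\<lambda>I k l. a k * (b l * (f k I * (cl_sign I (symdiff I K) * g l (symdiff I K))))"
  have "cl_mult (\<lambda>I. \<Sum>k\<in>UNIV. a k * f k I) (\<lambda>J. \<Sum>l\<in>UNIV. b l * g l J) K
     = (\<Sum>I\<in>UNIV. \<Sum>l\<in>UNIV. \<Sum>k\<in>UNIV. ?T I k l)"
    unfolding cl_mult_def by (simp add: sum_distrib_left sum_distrib_right mult_ac)
  also have "\<dots> = (\<Sum>l\<in>UNIV. \<Sum>I\<in>UNIV. \<Sum>k\<in>UNIV. ?T I k l)"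
    by (rule sum.swap)
  also have "\<dots> = (\<Sum>l\<in>UNIV. \<Sum>k\<in>UNIV. \<Sum>I\<in>UNIV. ?T I k l)"
    by (rule sum.cong[OF refl], rule sum.swap)
  also have "\<dots> = (\<Sum>k\<in>UNIV. \<Sum>l\<in>UNIV. \<Sum>I\<in>UNIV. ?T I k l)"
    by (rule sum.swap)
  also have "\<dots> = (\<Sum>k\<in>UNIV. \<Sum>l\<in>UNIV. a k * b l * cl_mult (f k) (g l) K)"
    unfolding cl_mult_def by (simp add: sum_distrib_left mult_ac)
  finally show ?thesis .
qed

definition mo :: "'n \<Rightarrow> 'n cl" where "mo k = (\<lambda>I. if I = {k} then 1 else 0)"

lemma cl_vec_expand: "cl_vec (x :: real^('n::{finite,linorder})) = (\<lambda>I. \<Sum>k\<in>UNIV. x $ k * mo k I)"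
  unfolding cl_vec_def mo_def by (rule ext, rule sum.cong) auto

lemma EE_mo: "EE k l = cl_comm (mo k) (mo l)"
  unfolding EE_def cl_vec_axis mo_def ..

lemma comm_vec:
  fixes x u :: "real^('n::{finite,linorder})"
  shows "cl_comm (cl_vec x) (cl_vec u) = (\<lambda>K. \<Sum>p\<in>UNIV. (x $ fst p * u $ snd p) * EE (fst p) (snd p) K)"
proof
  fix K
  have "cl_comm (cl_vec x) (cl_vec u) K
      = (\<Sum>k\<in>UNIV. \<Sum>l\<in>UNIV. x $ k * u $ l * cl_mult (mo k) (mo l) K)
      - (\<Sum>l\<in>UNIV. \<Sum>k\<in>UNIV. u $ l * x $ k * cl_mult (mo l) (mo k) K)"
    unfolding cl_comm_def cl_vec_expand mult_bilin ..
  also have "\<dots> = (\<Sum>k\<in>UNIV. \<Sum>l\<in>UNIV. x $ k * u $ l * cl_mult (mo k) (mo l) K)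
      - (\<Sum>k\<in>UNIV. \<Sum>l\<in>UNIV. u $ l * x $ k * cl_mult (mo l) (mo k) K)"
    by (subst sum.swap) simp
  also have "\<dots> = (\<Sum>k\<in>UNIV. \<Sum>l\<in>UNIV. (x $ k * u $ l) * EE k l K)"
    unfolding EE_mo cl_comm_def by (simp add: sum_subtractf[symmetric] algebra_simps)
  also have "\<dots> = (\<Sum>p\<in>UNIV. (x $ fst p * u $ snd p) * EE (fst p) (snd p) K)"
    by (simp add: sum.cartesian_product UNIV_Times_UNIV[symmetric] case_prod_beta del: UNIV_Times_UNIV)
  finally show "cl_comm (cl_vec x) (cl_vec u) K = (\<Sum>p\<in>UNIV. (x $ fst p * u $ snd p) * EE (fst p) (snd p) K)" .
qed

lemma EE_anti: "EE l k = cl_scale (-1) (EE k l)"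
  unfolding EE_def cl_comm_def cl_scale_def by auto



lemma tensor_op_linear:
  fixes A :: "'v::real_vector \<Rightarrow> 'v"
  assumes "linear A"
  shows "linear (tensor_op A (B :: real^('n::finite) \<Rightarrow> real^'n))"
proof (rule linearI)
  fix x y :: "'v^'n" and c :: real
  show "tensor_op A B (x + y) = tensor_op A B x + tensor_op A B y"
    unfolding tensor_op_def by (simp add: vec_eq_iff linear_add[OF assms] scaleR_add_right sum.distrib)
  show "tensor_op A B (c *\<^sub>R x) = c *\<^sub>R tensor_op A B x"
    unfolding tensor_op_def by (simp add: vec_eq_iff linear_scale[OF assms] scaleR_sum_right mult.commute)
qed

lemma C_hat_EE: "C_hat \<pi> X = (1/32) *\<^sub>R (\<Sum>i\<in>UNIV. \<Sum>j\<in>UNIV. tensor_op (\<pi> (EE i j)) (pi_Ad (EE i j)) X)"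
  unfolding C_hat_def EE_def ..

lemma C_hat_linear:
  assumes "\<And>i j. linear (\<pi> (EE i j))"
  shows "linear (C_hat (\<pi> :: ('n::{finite,linorder}) cl \<Rightarrow> 'v \<Rightarrow> 'v::real_vector))"
proof (rule linearI)
  fix x y and c :: real
  show "C_hat \<pi> (x + y) = C_hat \<pi> x + C_hat \<pi> y"
    unfolding C_hat_EE by (simp add: linear_add[OF tensor_op_linear[OF assms]] scaleR_add_right sum.distrib)
  show "C_hat \<pi> (c *\<^sub>R x) = c *\<^sub>R C_hat \<pi> x"
    unfolding C_hat_EE by (simp add: linear_scale[OF tensor_op_linear[OF assms]] scaleR_sum_right)
qed

lemma sum_if_vec: "(\<Sum>l\<in>UNIV. (if i = l \<and> Q then (1::real) else 0) *\<^sub>R w l) = (if Q then w (i::'a::finite) else (0::'b::real_vector))"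
proof (cases Q)
  case True
  have "(\<Sum>l\<in>UNIV. (if i = l \<and> Q then (1::real) else 0) *\<^sub>R w l) = (\<Sum>l\<in>UNIV. if i = l then w l else 0)"
    using True by (intro sum.cong) auto
  then show ?thesis using True by simp
qed simp

lemma aux4: "((4::real) * (a - b)) *\<^sub>R X = 4 *\<^sub>R (a *\<^sub>R X - b *\<^sub>R (X::'a::real_vector))"
  by (simp add: algebra_simps)

lemma tensor_EE:
  fixes \<pi> :: "('n::{finite,linorder}) cl \<Rightarrow> 'v \<Rightarrow> 'v::real_vector"
  assumes lin: "linear (\<pi> (EE i j))"
  shows "tensor_op (\<pi> (EE i j)) (pi_Ad (EE i j)) (tens \<phi> u) $ p
     = 4 *\<^sub>R ((if j = p then u $ i *\<^sub>R \<pi> (EE i j) \<phi> else 0) - (if i = p then u $ j *\<^sub>R \<pi> (EE i j) \<phi> else 0))"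
proof -
  have "tensor_op (\<pi> (EE i j)) (pi_Ad (EE i j)) (tens \<phi> u) $ p
      = (\<Sum>l\<in>UNIV. (4 * ((if i = l \<and> j = p then 1 else 0) - (if j = l \<and> i = p then 1 else 0))) *\<^sub>R (u $ l *\<^sub>R \<pi> (EE i j) \<phi>))"
    unfolding tensor_op_def tens_def piAd_EE by (simp add: linear_scale[OF lin])
  also have "\<dots> = (\<Sum>l\<in>UNIV. 4 *\<^sub>R ((if i = l \<and> j = p then 1 else 0) *\<^sub>R (u $ l *\<^sub>R \<pi> (EE i j) \<phi>)
                  - (if j = l \<and> i = p then 1 else 0) *\<^sub>R (u $ l *\<^sub>R \<pi> (EE i j) \<phi>)))"
    by (rule sum.cong[OF refl], rule aux4)
  also have "\<dots> = 4 *\<^sub>R ((\<Sum>l\<in>UNIV. (if i = l \<and> j = p then 1 else 0) *\<^sub>R (u $ l *\<^sub>R \<pi> (EE i j) \<phi>))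
                  - (\<Sum>l\<in>UNIV. (if j = l \<and> i = p then 1 else 0) *\<^sub>R (u $ l *\<^sub>R \<pi> (EE i j) \<phi>)))"
    by (simp only: scaleR_sum_right[symmetric] sum_subtractf)
  also have "\<dots> = 4 *\<^sub>R ((if j = p then u $ i *\<^sub>R \<pi> (EE i j) \<phi> else 0) - (if i = p then u $ j *\<^sub>R \<pi> (EE i j) \<phi> else 0))"
    by (simp only: sum_if_vec)
  finally show ?thesis .
qed

lemma C_hat_tens:
  fixes \<pi> :: "('n::{finite,linorder}) cl \<Rightarrow> 'v \<Rightarrow> 'v::real_vector"
  assumes lin: "\<And>i j. linear (\<pi> (EE i j))"
    and anti: "\<And>i j v. \<pi> (EE j i) v = - \<pi> (EE i j) v"
  shows "C_hat \<pi> (tens \<phi> u) $ p = (1/4) *\<^sub>R (\<Sum>l\<in>UNIV. u $ l *\<^sub>R \<pi> (EE l p) \<phi>)"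
proof -
  have "C_hat \<pi> (tens \<phi> u) $ p = (1/32) *\<^sub>R (\<Sum>i\<in>UNIV. \<Sum>j\<in>UNIV.
      4 *\<^sub>R ((if j = p then u $ i *\<^sub>R \<pi> (EE i j) \<phi> else 0) - (if i = p then u $ j *\<^sub>R \<pi> (EE i j) \<phi> else 0)))"
    unfolding C_hat_EE by (simp add: sum_component tensor_EE lin)
  also have "\<dots> = (1/32) *\<^sub>R (4 *\<^sub>R ((\<Sum>i\<in>UNIV. \<Sum>j\<in>UNIV. (if j = p then u $ i *\<^sub>R \<pi> (EE i j) \<phi> else 0))
        - (\<Sum>i\<in>UNIV. \<Sum>j\<in>UNIV. (if i = p then u $ j *\<^sub>R \<pi> (EE i j) \<phi> else 0))))"
    by (simp only: scaleR_sum_right[symmetric] sum_subtractf)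
  finally have 0: "C_hat \<pi> (tens \<phi> u) $ p = (1/32) *\<^sub>R (4 *\<^sub>R ((\<Sum>i\<in>UNIV. \<Sum>j\<in>UNIV. (if j = p then u $ i *\<^sub>R \<pi> (EE i j) \<phi> else 0))
        - (\<Sum>i\<in>UNIV. \<Sum>j\<in>UNIV. (if i = p then u $ j *\<^sub>R \<pi> (EE i j) \<phi> else 0))))" .
  have e1: "(\<Sum>i\<in>UNIV. \<Sum>j\<in>UNIV. (if j = p then u $ i *\<^sub>R \<pi> (EE i j) \<phi> else 0)) = (\<Sum>i\<in>UNIV. u $ i *\<^sub>R \<pi> (EE i p) \<phi>)"
    by simp
  have e2: "(\<Sum>i\<in>UNIV. \<Sum>j\<in>UNIV. (if i = p then u $ j *\<^sub>R \<pi> (EE i j) \<phi> else 0)) = (\<Sum>j\<in>UNIV. u $ j *\<^sub>R \<pi> (EE p j) \<phi>)"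
    by (subst sum.swap) simp
  have e3: "(\<Sum>j\<in>UNIV. u $ j *\<^sub>R \<pi> (EE p j) \<phi>) = - (\<Sum>j\<in>UNIV. u $ j *\<^sub>R \<pi> (EE j p) \<phi>)"
  proof -
    have "u $ j *\<^sub>R \<pi> (EE p j) \<phi> = - (u $ j *\<^sub>R \<pi> (EE j p) \<phi>)" for j
      by (simp only: anti[of p j] scaleR_minus_right)
    then show ?thesis by (simp only: sum_negf)
  qed
  have e4: "(1/32) *\<^sub>R (4 *\<^sub>R (A - - A)) = (1/4) *\<^sub>R (A::'v)" for A
    by (simp add: scaleR_2[symmetric])
  show ?thesis unfolding 0 e1 e2 e3 e4 ..
qed

lemma orthonormal_rows:
  fixes b :: "'n::finite \<Rightarrow> real^'n"
  assumes on: "\<forall>i j. inner (b i) (b j) = (if i = j then 1 else 0)"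
  shows "(\<Sum>i\<in>UNIV. b i $ p * b i $ k) = (if p = k then 1 else 0)"
proof -
  define M :: "real^'n^'n" where "M = (\<chi> i. b i)"
  have "M ** transpose M = mat 1"
    using on unfolding M_def by (simp add: vec_eq_iff matrix_matrix_mult_def transpose_def mat_def inner_vec_def)
  then have "transpose M ** M = mat 1" using matrix_left_right_inverse by blast
  then have "(transpose M ** M) $ p $ k = mat 1 $ p $ k" by simp
  then show ?thesis unfolding M_def by (simp add: matrix_matrix_mult_def transpose_def mat_def mult.commute)
qed

lemma proj_unique:
  fixes W :: "'a::real_inner set"
  assumes "subspace W" "y \<in> W" "\<forall>w\<in>W. inner (x - y) w = 0"
  shows "orth_proj W x = y"
  unfolding orth_proj_def
proof (rule the_equality)
  show "y \<in> W \<and> (\<forall>w\<in>W. inner (x - y) w = 0)" using assms by simp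
  fix y' assume h: "y' \<in> W \<and> (\<forall>w\<in>W. inner (x - y') w = 0)"
  have d: "y - y' \<in> W" using assms(1,2) h by (simp add: subspace_diff)
  have "inner (y - y') (y - y') = inner (x - y') (y - y') - inner (x - y) (y - y')"
    by (simp add: inner_diff_left)
  also have "\<dots> = 0" using h assms(3) d by simp
  finally show "y' = y" by simp
qed



theorem lemma3p4:
  fixes \<pi> :: "('n::{finite,linorder}) cl \<Rightarrow> 'v \<Rightarrow> ('v::euclidean_space)"
    and J :: "'v \<Rightarrow> 'v"
    and N :: nat
    and W :: "nat \<Rightarrow> ('v ^ ('n::{finite,linorder})) set"
    and m :: "nat \<Rightarrow> real"
  assumes rep: "unitary_spin_rep \<pi> J UNIV"
    and irr: "irreducible_rep \<pi> J UNIV"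
    and sub: "\<And>k. k \<le> N \<Longrightarrow> subspace (W k)"
    and inv: "\<And>k a X. k \<le> N \<Longrightarrow> a \<in> spin_alg \<Longrightarrow> X \<in> W k \<Longrightarrow> tens_act \<pi> a X \<in> W k"
    and Jinv: "\<And>k X. k \<le> N \<Longrightarrow> X \<in> W k \<Longrightarrow> tens_J J X \<in> W k"
    and irrW: "\<And>k. k \<le> N \<Longrightarrow> irreducible_rep (tens_act \<pi>) (tens_J J) (W k)"
    and orth: "\<And>k l X Y. k \<le> N \<Longrightarrow> l \<le> N \<Longrightarrow> k \<noteq> l \<Longrightarrow> X \<in> W k \<Longrightarrow> Y \<in> W l \<Longrightarrow> inner X Y = 0"
    and decomp: "\<And>X. \<exists>Z. (\<forall>k\<le>N. Z k \<in> W k) \<and> X = (\<Sum>k\<le>N. Z k)"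
    and weight: "\<And>k X. k \<le> N \<Longrightarrow> X \<in> W k \<Longrightarrow> C_hat \<pi> X = m k *\<^sub>R X"
  shows "\<forall>k\<le>N. \<forall>u :: real ^ ('n::{finite,linorder}). \<forall>b :: ('n::{finite,linorder}) \<Rightarrow> real ^ ('n::{finite,linorder}).
           (\<forall>i j. inner (b i) (b j) = (if i = j then 1 else 0)) \<longrightarrow>
           (\<forall>\<phi>. - (1/4) *\<^sub>R (\<Sum>i\<in>UNIV. clifford_hom (W k) (b i) (\<pi> (cl_comm (cl_vec (b i)) (cl_vec u)) \<phi>))
                 = m k *\<^sub>R clifford_hom (W k) u \<phi>)"
proof (intro allI impI)
  fix k :: nat and u :: "real^('n::{finite,linorder})" and b :: "('n::{finite,linorder}) \<Rightarrow> real^('n::{finite,linorder})" and \<phi> :: 'v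
  assume kN: "k \<le> N" and on: "\<forall>i j. inner (b i) (b j) = (if i = j then 1 else (0::real))"
  have lin: "\<And>i j. linear (\<pi> (EE i j))" using rep_lin[OF rep spin_EE] .
  have anti: "\<pi> (EE j i) v = - \<pi> (EE i j) v" for i j v
    using rep_scale[OF rep spin_EE[of i j], of "-1"] EE_anti[of j i] by simp
  have comm_pi: "\<pi> (cl_comm (cl_vec x) (cl_vec u)) \<phi> = (\<Sum>k\<in>UNIV. \<Sum>l\<in>UNIV. (x $ k * u $ l) *\<^sub>R \<pi> (EE k l) \<phi>)" for x
  proof -
    have "\<pi> (cl_comm (cl_vec x) (cl_vec u)) \<phi> = (\<Sum>q\<in>UNIV. (x $ fst q * u $ snd q) *\<^sub>R \<pi> (EE (fst q) (snd q)) \<phi>)"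
    proof -
      have fin: "finite (UNIV :: ('n \<times> 'n) set)" by simp
      have e: "\<And>q. q \<in> UNIV \<Longrightarrow> EE (fst q) (snd q) \<in> spin_alg" by (rule spin_EE)
      show ?thesis unfolding comm_vec using pi_sum[OF rep fin e, where c="\<lambda>q. x $ fst q * u $ snd q"] by simp
    qed
    also have "\<dots> = (\<Sum>k\<in>UNIV. \<Sum>l\<in>UNIV. (x $ k * u $ l) *\<^sub>R \<pi> (EE k l) \<phi>)"
      by (simp add: sum.cartesian_product UNIV_Times_UNIV[symmetric] case_prod_beta del: UNIV_Times_UNIV)
    finally show ?thesis .
  qed
  have VI: "- (1/4) *\<^sub>R (\<Sum>i\<in>UNIV. tens (\<pi> (cl_comm (cl_vec (b i)) (cl_vec u)) \<phi>) (b i)) = C_hat \<pi> (tens \<phi> u)"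
  proof (rule vec_eq_iff[THEN iffD2], rule allI)
    fix q
    have "(- (1/4) *\<^sub>R (\<Sum>i\<in>UNIV. tens (\<pi> (cl_comm (cl_vec (b i)) (cl_vec u)) \<phi>) (b i))) $ q
        = - (1/4) *\<^sub>R (\<Sum>i\<in>UNIV. b i $ q *\<^sub>R (\<Sum>k\<in>UNIV. \<Sum>l\<in>UNIV. (b i $ k * u $ l) *\<^sub>R \<pi> (EE k l) \<phi>))"
      by (simp add: sum_component tens_def comm_pi)
    also have "\<dots> = - (1/4) *\<^sub>R (\<Sum>i\<in>UNIV. \<Sum>k\<in>UNIV. \<Sum>l\<in>UNIV. (b i $ q * b i $ k * u $ l) *\<^sub>R \<pi> (EE k l) \<phi>)"
      by (simp add: scaleR_sum_right mult.assoc)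
    also have "\<dots> = - (1/4) *\<^sub>R (\<Sum>k\<in>UNIV. \<Sum>i\<in>UNIV. \<Sum>l\<in>UNIV. (b i $ q * b i $ k * u $ l) *\<^sub>R \<pi> (EE k l) \<phi>)"
      by (subst sum.swap) (rule refl)
    also have "\<dots> = - (1/4) *\<^sub>R (\<Sum>k\<in>UNIV. \<Sum>l\<in>UNIV. \<Sum>i\<in>UNIV. (b i $ q * b i $ k * u $ l) *\<^sub>R \<pi> (EE k l) \<phi>)"
      by (subst (2) sum.swap) (rule refl)
    also have "\<dots> = - (1/4) *\<^sub>R (\<Sum>k\<in>UNIV. \<Sum>l\<in>UNIV. ((\<Sum>i\<in>UNIV. b i $ q * b i $ k) * u $ l) *\<^sub>R \<pi> (EE k l) \<phi>)"
      by (simp add: scaleR_sum_left sum_distrib_right)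
    also have "\<dots> = - (1/4) *\<^sub>R (\<Sum>k\<in>UNIV. \<Sum>l\<in>UNIV. ((if q = k then 1 else 0) * u $ l) *\<^sub>R \<pi> (EE k l) \<phi>)"
      by (simp only: orthonormal_rows[OF on])
    also have "\<dots> = - (1/4) *\<^sub>R (\<Sum>l\<in>UNIV. u $ l *\<^sub>R \<pi> (EE q l) \<phi>)"
    proof -
      have h: "(\<Sum>l\<in>UNIV. ((if q = k then 1 else 0) * u $ l) *\<^sub>R \<pi> (EE k l) \<phi>)
          = (if q = k then (\<Sum>l\<in>UNIV. u $ l *\<^sub>R \<pi> (EE k l) \<phi>) else 0)" for k
        by (cases "q = k") simp_all
      show ?thesis by (simp only: h) simp
    qed
    also have "\<dots> = (1/4) *\<^sub>R (\<Sum>l\<in>UNIV. u $ l *\<^sub>R \<pi> (EE l q) \<phi>)"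
    proof -
      have "u $ l *\<^sub>R \<pi> (EE q l) \<phi> = - (u $ l *\<^sub>R \<pi> (EE l q) \<phi>)" for l
        by (simp only: anti[of q l] scaleR_minus_right)
      then show ?thesis by (simp only: sum_negf) simp
    qed
    also have "\<dots> = C_hat \<pi> (tens \<phi> u) $ q"
      using C_hat_tens[where \<pi>=\<pi>, OF lin anti] by simp
    finally show "(- (1/4) *\<^sub>R (\<Sum>i\<in>UNIV. tens (\<pi> (cl_comm (cl_vec (b i)) (cl_vec u)) \<phi>) (b i))) $ q = C_hat \<pi> (tens \<phi> u) $ q" .
  qed
  define P where "P = orth_proj (W k)"
  have Pdec: "P X = Z k" if Z: "\<forall>l\<le>N. Z l \<in> W l" "X = (\<Sum>l\<le>N. Z l)" for X Z
    unfolding P_def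
  proof (rule proj_unique[OF sub[OF kN]])
    show "Z k \<in> W k" using Z kN by simp
    show "\<forall>w\<in>W k. inner (X - Z k) w = 0"
    proof
      fix w assume w: "w \<in> W k"
      have "X - Z k = (\<Sum>l\<in>{..N} - {k}. Z l)" using Z(2) kN by (simp add: sum_diff1)
      then have "inner (X - Z k) w = (\<Sum>l\<in>{..N} - {k}. inner (Z l) w)" by (simp add: inner_sum_left)
      also have "\<dots> = 0" using orth[OF _ kN _ _ w] Z(1) by (intro sum.neutral) auto
      finally show "inner (X - Z k) w = 0" .
    qed
  qed
  have Psum: "P (\<Sum>i\<in>UNIV. F i) = (\<Sum>i\<in>UNIV. P (F i))" for F :: "('n::{finite,linorder}) \<Rightarrow> 'v^('n::{finite,linorder})"
  proof -
    have ex: "\<forall>i. \<exists>Z. (\<forall>l\<le>N. Z l \<in> W l) \<and> F i = (\<Sum>l\<le>N. Z l)" using decomp by blast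
    obtain Z where Z: "\<forall>i. (\<forall>l\<le>N. Z i l \<in> W l) \<and> F i = (\<Sum>l\<le>N. Z i l)"
      using choice[OF ex] by blast
    have "P (\<Sum>i\<in>UNIV. F i) = (\<Sum>i\<in>UNIV. Z i k)"
    proof (rule Pdec)
      show "\<forall>l\<le>N. (\<Sum>i\<in>UNIV. Z i l) \<in> W l" using Z sub by (auto intro: subspace_sum)
      show "(\<Sum>i\<in>UNIV. F i) = (\<Sum>l\<le>N. \<Sum>i\<in>UNIV. Z i l)" using Z by (simp add: sum.swap[of _ "{..N}"])
    qed
    also have "\<dots> = (\<Sum>i\<in>UNIV. P (F i))" using Z Pdec by simp
    finally show ?thesis .
  qed
  have Pscale: "P (c *\<^sub>R X) = c *\<^sub>R P X" for c X
  proof -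
    obtain Z where Z: "\<forall>l\<le>N. Z l \<in> W l" "X = (\<Sum>l\<le>N. Z l)" using decomp by metis
    have "P (c *\<^sub>R X) = c *\<^sub>R Z k"
      by (rule Pdec) (use Z sub in \<open>auto intro: subspace_scale simp: scaleR_sum_right\<close>)
    then show ?thesis using Pdec[OF Z] by simp
  qed
  have PC: "P (C_hat \<pi> X) = m k *\<^sub>R P X" for X
  proof -
    obtain Z where Z: "\<forall>l\<le>N. Z l \<in> W l" "X = (\<Sum>l\<le>N. Z l)" using decomp by metis
    have "C_hat \<pi> X = (\<Sum>l\<le>N. C_hat \<pi> (Z l))"
      unfolding Z(2) by (rule linear_sum[OF C_hat_linear[where \<pi>=\<pi>, OF lin]])
    also have "\<dots> = (\<Sum>l\<le>N. m l *\<^sub>R Z l)" using Z weight by simp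
    finally have "P (C_hat \<pi> X) = m k *\<^sub>R Z k"
      by (intro Pdec) (use Z sub in \<open>auto intro: subspace_scale\<close>)
    then show ?thesis using Pdec[OF Z] by simp
  qed
  have "- (1/4) *\<^sub>R (\<Sum>i\<in>UNIV. clifford_hom (W k) (b i) (\<pi> (cl_comm (cl_vec (b i)) (cl_vec u)) \<phi>))
      = P (- (1/4) *\<^sub>R (\<Sum>i\<in>UNIV. tens (\<pi> (cl_comm (cl_vec (b i)) (cl_vec u)) \<phi>) (b i)))"
    unfolding clifford_hom_def P_def[symmetric] Pscale Psum ..
  also have "\<dots> = m k *\<^sub>R clifford_hom (W k) u \<phi>"
    unfolding VI PC by (simp add: clifford_hom_def P_def)
  finally show "- (1/4) *\<^sub>R (\<Sum>i\<in>UNIV. clifford_hom (W k) (b i) (\<pi> (cl_comm (cl_vec (b i)) (cl_vec u)) \<phi>))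
      = m k *\<^sub>R clifford_hom (W k) u \<phi>" .
qed

end
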